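(* Assume $X'X/n\to C$ as $n\to\infty$ with $C$ positive definite. If $\lambda^*\to0$ as $n\to\infty$, then $\sqrt{n}(\hat\beta_{AL}-\hat\beta_{LS})\to0$ as $n\to\infty$ (for every realization).
   Context: Linear regression model $y=X\beta+\varepsilon$ with $y\in\mathbb{R}^n$, a non-stochastic regressor matrix $X\in\mathbb{R}^{n\times p}$ ($p$ fixed) of full column rank, unknown $\beta\in\mathbb{R}^p$, and error vector $\varepsilon$ with i.i.d. components of mean zero and finite variance $\sigma^2>0$. $\hat\beta_{LS}=(X'X)^{-1}X'y$; the events $\{\hat\beta_{LS,j}=0\}$ are assumed to have probability zero and are excluded. Non-negative tuning parameters $\lambda_j=\lambda_{n,j}$, $j=1,\dots,p$, and $\lambda^*=\max_{1\le j\le p}\lambda_j$. The adaptive Lasso estimator is $\hat\beta_{AL}=\arg\min_{b\in\mathbb{R}^p}\big(\|y-Xb\|^2+2\sum_{j=1}^p\lambda_j|b_j|/|\hat\beta_{LS,j}|\big)$. *)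

theory Defs
  imports "HOL-Analysis.Analysis"
begin

text \<open>Design matrix for sample size n, given by its rows: row i (for i < n) is
  X n i :: real^'p.  Response y n i for i < n.\<close>

definition gram :: "(nat \<Rightarrow> nat \<Rightarrow> real^'p) \<Rightarrow> nat \<Rightarrow> real^'p^'p" where
  "gram X n = (\<Sum>i<n. (\<chi> a b. X n i $ a * X n i $ b))"

definition Xty :: "(nat \<Rightarrow> nat \<Rightarrow> real^'p) \<Rightarrow> (nat \<Rightarrow> nat \<Rightarrow> real) \<Rightarrow> nat \<Rightarrow> real^'p" where
  "Xty X y n = (\<Sum>i<n. y n i *\<^sub>R X n i)"

definition beta_LS :: "(nat \<Rightarrow> nat \<Rightarrow> real^'p) \<Rightarrow> (nat \<Rightarrow> nat \<Rightarrow> real) \<Rightarrow> nat \<Rightarrow> real^'p" where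
  "beta_LS X y n = matrix_inv (gram X n) *v Xty X y n"

definition AL_obj :: "(nat \<Rightarrow> nat \<Rightarrow> real^'p) \<Rightarrow> (nat \<Rightarrow> nat \<Rightarrow> real) \<Rightarrow> (nat \<Rightarrow> 'p \<Rightarrow> real)
    \<Rightarrow> nat \<Rightarrow> real^'p \<Rightarrow> real" where
  "AL_obj X y lam n b = (\<Sum>i<n. (y n i - X n i \<bullet> b)\<^sup>2)
      + 2 * (\<Sum>j\<in>UNIV. lam n j * \<bar>b $ j\<bar> / \<bar>beta_LS X y n $ j\<bar>)"

definition pos_def :: "real^'p^'p \<Rightarrow> bool" where
  "pos_def C \<longleftrightarrow> transpose C = C \<and> (\<forall>x. x \<noteq> 0 \<longrightarrow> x \<bullet> (C *v x) > 0)"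

end

theory Submission
  imports Defs
begin

lemma gram_mult: "gram X n *v v = (\<Sum>i<n. (X n i \<bullet> v) *\<^sub>R X n i)"
  by (simp add: gram_def vec_eq_iff matrix_vector_mult_def sum_component inner_vec_def
      sum_distrib_left sum_distrib_right mult.commute mult.left_commute sum.swap[of _ "{..<n}"])

lemma gram_quad: "v \<bullet> (gram X n *v v) = (\<Sum>i<n. (X n i \<bullet> v)\<^sup>2)"
  by (simp add: gram_mult inner_sum_right power2_eq_square inner_commute)

lemma gram_inv: "invertible (gram X n) \<Longrightarrow> gram X n *v beta_LS X y n = Xty X y n"
proof -
  assume "invertible (gram X n)"
  then have "gram X n ** matrix_inv (gram X n) = mat 1"
    unfolding invertible_def matrix_inv_def by (rule someI2_ex) auto
  then show ?thesis
    by (simp add: beta_LS_def matrix_vector_mul_assoc)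
qed

lemma sq_expand:
  "(\<Sum>i<n. (y n i - X n i \<bullet> b)\<^sup>2) = (\<Sum>i<n. (y n i - X n i \<bullet> a)\<^sup>2)
     - 2 * ((Xty X y n - gram X n *v a) \<bullet> (b - a)) + (b - a) \<bullet> (gram X n *v (b - a))"
proof -
  have "\<And>i. (y n i - X n i \<bullet> b)\<^sup>2 = (y n i - X n i \<bullet> a)\<^sup>2 - 2 * ((y n i - X n i \<bullet> a) * (X n i \<bullet> (b - a)))
     + (X n i \<bullet> (b - a))\<^sup>2"
    by (simp add: inner_diff_right power2_eq_square algebra_simps)
  then have "(\<Sum>i<n. (y n i - X n i \<bullet> b)\<^sup>2) = (\<Sum>i<n. (y n i - X n i \<bullet> a)\<^sup>2)
     - 2 * (\<Sum>i<n. (y n i - X n i \<bullet> a) * (X n i \<bullet> (b - a))) + (\<Sum>i<n. (X n i \<bullet> (b - a))\<^sup>2)"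
    by (simp add: sum.distrib sum_subtractf sum_distrib_left)
  moreover have "(\<Sum>i<n. (y n i - X n i \<bullet> a) * (X n i \<bullet> (b - a))) = (Xty X y n - gram X n *v a) \<bullet> (b - a)"
  proof -
    have "Xty X y n - gram X n *v a = (\<Sum>i<n. (y n i - X n i \<bullet> a) *\<^sub>R X n i)"
      by (simp add: Xty_def gram_mult sum_subtractf scaleR_left_diff_distrib inner_commute)
    then show ?thesis by (simp add: inner_sum_left)
  qed
  ultimately show ?thesis by (simp add: gram_quad)
qed

lemma pd_bound:
  fixes C :: "real^'p^'p"
  assumes "pos_def C"
  shows "\<exists>c>0. \<forall>x. c * (norm x)\<^sup>2 \<le> x \<bullet> (C *v x)"
proof -
  let ?f = "\<lambda>x::real^'p. x \<bullet> (C *v x)"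
  have cont: "continuous_on (sphere 0 1) ?f"
    by (intro continuous_intros linear_continuous_on linear_conv_bounded_linear[THEN iffD1] matrix_vector_mul_linear)
  have ne: "sphere (0::real^'p) 1 \<noteq> {}" by simp
  obtain x0 where x0: "x0 \<in> sphere 0 1" "\<And>y. y \<in> sphere 0 1 \<Longrightarrow> ?f x0 \<le> ?f y"
    using continuous_attains_inf[OF compact_sphere ne cont] by blast
  have "x0 \<noteq> 0" using x0(1) by auto
  then have cpos: "?f x0 > 0" using assms by (simp add: pos_def_def)
  have "?f x0 * (norm x)\<^sup>2 \<le> ?f x" for x
  proof (cases "x = 0")
    case True then show ?thesis by simp
  next
    case False
    define u where "u = (1 / norm x) *\<^sub>R x"
    have "u \<in> sphere 0 1" using False by (simp add: u_def)
    then have "?f x0 \<le> ?f u" by (rule x0(2))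
    also have "?f u = ?f x / (norm x)\<^sup>2"
      by (simp add: u_def matrix_vector_mult_scaleR power2_eq_square)
    finally show ?thesis using False by (simp add: field_simps)
  qed
  then show ?thesis using cpos by blast
qed

lemma quad_pert:
  fixes M :: "real^'p^'p"
  shows "\<bar>x \<bullet> (M *v x)\<bar> \<le> real CARD('p) * real CARD('p) * norm M * (norm x)\<^sup>2"
proof -
  have "onorm ((*v) M) \<le> real CARD('p) * real CARD('p) * norm M"
    by (rule onorm_le_matrix_component) (rule order_trans[OF component_le_norm_cart Finite_Cartesian_Product.norm_nth_le])
  moreover have "norm (M *v x) \<le> onorm ((*v) M) * norm x"
    by (rule onorm) (simp add: linear_conv_bounded_linear[symmetric])
  ultimately have "norm (M *v x) \<le> real CARD('p) * real CARD('p) * norm M * norm x"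
    by (meson mult_right_mono norm_ge_zero order_trans)
  moreover have "\<bar>x \<bullet> (M *v x)\<bar> \<le> norm x * norm (M *v x)" by (rule Cauchy_Schwarz_ineq2)
  ultimately show ?thesis
    by (smt (verit) mult_left_mono norm_ge_zero power2_eq_square mult.assoc mult.commute)
qed

theorem corollary1:
  fixes X :: "nat \<Rightarrow> nat \<Rightarrow> real^'p"
    and beta :: "real^'p"
    and eps :: "nat \<Rightarrow> nat \<Rightarrow> real"
    and y :: "nat \<Rightarrow> nat \<Rightarrow> real"
    and lam :: "nat \<Rightarrow> 'p \<Rightarrow> real"
    and C :: "real^'p^'p"
    and beta_AL :: "nat \<Rightarrow> real^'p"
  assumes model: "\<And>n i. i < n \<Longrightarrow> y n i = X n i \<bullet> beta + eps n i"
    and regular: "\<forall>\<^sub>F n in sequentially. invertible (gram X n) \<and> (\<forall>j. beta_LS X y n $ j \<noteq> 0)"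
    and lam_nonneg: "\<And>n j. lam n j \<ge> 0"
    and AL_min: "\<forall>\<^sub>F n in sequentially. \<forall>b. AL_obj X y lam n (beta_AL n) \<le> AL_obj X y lam n b"
    and gram_lim: "(\<lambda>n. (1 / real n) *\<^sub>R gram X n) \<longlonglongrightarrow> C"
    and C_pd: "pos_def C"
    and lam_lim: "(\<lambda>n. Max (range (lam n))) \<longlonglongrightarrow> 0"
  shows "(\<lambda>n. sqrt (real n) *\<^sub>R (beta_AL n - beta_LS X y n)) \<longlonglongrightarrow> 0"
proof -
  obtain c where c: "c > 0" "\<And>x. c * (norm x)\<^sup>2 \<le> x \<bullet> (C *v x)"
    using pd_bound[OF C_pd] by blast
  define K where "K = real CARD('p) * real CARD('p)"
  have Kpos: "K > 0" by (simp add: K_def)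
  define M where "M n = Max (range (lam n))" for n
  have lamM: "lam n j \<le> M n" for n j
    unfolding M_def by (rule Max_ge) auto
  have Mnn: "M n \<ge> 0" for n using lamM[of n] lam_nonneg[of n] by (meson order_trans)
  have ev1: "\<forall>\<^sub>F n in sequentially. norm ((1 / real n) *\<^sub>R gram X n - C) < c / (2 * K)"
    using gram_lim c(1) Kpos unfolding tendsto_iff dist_norm by (simp add: divide_pos_pos)
  have ev2: "\<forall>\<^sub>F n in sequentially. n > 0"
    by (simp add: eventually_gt_at_top)
  define D where "D = 4 * real CARD('p) / c"
  have bound: "\<forall>\<^sub>F n in sequentially.
      real n * (norm (beta_AL n - beta_LS X y n))\<^sup>2 \<le> D * M n"
    using regular AL_min ev1 ev2
  proof eventually_elim
    case (elim n)
    let ?G = "gram X n" and ?bL = "beta_LS X y n"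
    define d where "d = beta_AL n - ?bL"
    have inv: "invertible ?G" and nz: "\<And>j. ?bL $ j \<noteq> 0" using elim(1) by auto
    have "AL_obj X y lam n (beta_AL n) \<le> AL_obj X y lam n ?bL" using elim(2) by blast
    moreover have "(\<Sum>i<n. (y n i - X n i \<bullet> beta_AL n)\<^sup>2) = (\<Sum>i<n. (y n i - X n i \<bullet> ?bL)\<^sup>2) + d \<bullet> (?G *v d)"
      using sq_expand[of y n X "beta_AL n" ?bL] gram_inv[OF inv, of y] by (simp add: d_def)
    moreover have "(\<Sum>j\<in>UNIV. lam n j * \<bar>beta_AL n $ j\<bar> / \<bar>?bL $ j\<bar>) \<ge> 0"
      by (intro sum_nonneg divide_nonneg_nonneg mult_nonneg_nonneg lam_nonneg) auto
    moreover have "(\<Sum>j\<in>UNIV. lam n j * \<bar>?bL $ j\<bar> / \<bar>?bL $ j\<bar>) = (\<Sum>j\<in>UNIV. lam n j)"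
      using nz by simp
    ultimately have q1: "d \<bullet> (?G *v d) \<le> 2 * (\<Sum>j\<in>UNIV. lam n j)"
      unfolding AL_obj_def by linarith
    have "(\<Sum>j\<in>UNIV. lam n j) \<le> (\<Sum>j\<in>(UNIV::'p set). M n)"
      by (rule sum_mono) (rule lamM)
    then have q2: "d \<bullet> (?G *v d) \<le> 2 * real CARD('p) * M n" using q1 by simp
    define Gn where "Gn = (1 / real n) *\<^sub>R ?G"
    have GG: "?G = real n *\<^sub>R Gn" using elim(4) by (simp add: Gn_def)
    have "d \<bullet> (Gn *v d) = d \<bullet> (C *v d) + d \<bullet> ((Gn - C) *v d)"
      by (simp add: matrix_vector_mult_diff_rdistrib inner_diff_right)
    moreover have "\<bar>d \<bullet> ((Gn - C) *v d)\<bar> \<le> K * norm (Gn - C) * (norm d)\<^sup>2"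
      using quad_pert[of d "Gn - C"] by (simp add: K_def)
    moreover have "K * norm (Gn - C) \<le> c / 2"
      using elim(3) Kpos by (simp add: Gn_def field_simps)
    ultimately have "d \<bullet> (Gn *v d) \<ge> c * (norm d)\<^sup>2 - c / 2 * (norm d)\<^sup>2"
      using c(2)[of d] mult_right_mono[OF \<open>K * norm (Gn - C) \<le> c / 2\<close>, of "(norm d)\<^sup>2"]
      by (smt (verit) zero_le_power2)
    then have q3: "d \<bullet> (Gn *v d) \<ge> c / 2 * (norm d)\<^sup>2" by simp
    have "d \<bullet> (?G *v d) = real n * (d \<bullet> (Gn *v d))"
    proof -
      have "(real n *\<^sub>R Gn) *v d = real n *\<^sub>R (Gn *v d)"
        by (simp add: vec_eq_iff matrix_vector_mult_def sum_distrib_left algebra_simps)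
      then show ?thesis by (simp add: GG)
    qed
    then have "real n * (c / 2 * (norm d)\<^sup>2) \<le> 2 * real CARD('p) * M n"
      using q2 q3 elim(4) by (smt (verit) mult_left_mono of_nat_0_le_iff)
    then have "real n * (norm d)\<^sup>2 * c \<le> 4 * real CARD('p) * M n" by (simp add: field_simps)
    then show ?case using c(1) by (simp add: D_def d_def field_simps)
  qed
  have "(\<lambda>n. sqrt (D * M n)) \<longlonglongrightarrow> sqrt (D * 0)"
    by (intro tendsto_real_sqrt tendsto_mult tendsto_const) (simp add: M_def lam_lim)
  then have lim0: "(\<lambda>n. sqrt (D * M n)) \<longlonglongrightarrow> 0" by simp
  have "(\<lambda>n. norm (sqrt (real n) *\<^sub>R (beta_AL n - beta_LS X y n))) \<longlonglongrightarrow> 0"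
  proof (rule tendsto_sandwich[OF _ _ tendsto_const lim0])
    show "\<forall>\<^sub>F n in sequentially. 0 \<le> norm (sqrt (real n) *\<^sub>R (beta_AL n - beta_LS X y n))" by simp
    show "\<forall>\<^sub>F n in sequentially. norm (sqrt (real n) *\<^sub>R (beta_AL n - beta_LS X y n)) \<le> sqrt (D * M n)"
      using bound
    proof eventually_elim
      case (elim n)
      have "(norm (sqrt (real n) *\<^sub>R (beta_AL n - beta_LS X y n)))\<^sup>2 = real n * (norm (beta_AL n - beta_LS X y n))\<^sup>2"
        by (simp add: power_mult_distrib)
      then show ?case using elim by (simp add: real_le_rsqrt)
    qed
  qed
  then show ?thesis by (rule tendsto_norm_zero_cancel)
qed

end
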